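(* For every tree $G$ on $n$ vertices there exists a valid search tree $P$ on $G$ which is Steiner-closed and has height at most $2\log_2 n+2$.
   Context: Search tree on a tree: a rooted tree $T$ is a valid search tree on an unrooted tree $G$ if the root $r$ of $T$ is a vertex of $G$ and the subtrees of $T\setminus r$ are valid search trees on the connected components of $G\setminus r$. Height is the maximum number of nodes on a root-to-leaf path. For vertices $a,b$ of $G$, $P(a,b)$ is the vertex set of the path from $a$ to $b$ in $G$. Convex hull: for $S\subseteq V(G)$, $\mathrm{CH}(S)$ is the subgraph of $G$ induced by $\bigcup_{a,b\in S}P(a,b)$. A set $S$ is Steiner-closed (with respect to $G$) if every vertex of $\mathrm{CH}(S)\setminus S$ has degree exactly $2$ in $\mathrm{CH}(S)$. A search tree $T$ of $G$ is Steiner-closed if for every node $v$ of $T$, the set of nodes on the path in $T$ from the root to $v$ is a Steiner-closed set with respect to $G$. *)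

theory Defs
  imports Complex_Main
begin

definition is_walk :: "('a \<Rightarrow> 'a \<Rightarrow> bool) \<Rightarrow> 'a set \<Rightarrow> 'a list \<Rightarrow> bool" where
  "is_walk E V ps \<longleftrightarrow> ps \<noteq> [] \<and> set ps \<subseteq> V \<and>
     (\<forall>i. Suc i < length ps \<longrightarrow> E (ps ! i) (ps ! Suc i))"

definition is_path :: "('a \<Rightarrow> 'a \<Rightarrow> bool) \<Rightarrow> 'a set \<Rightarrow> 'a \<Rightarrow> 'a \<Rightarrow> 'a list \<Rightarrow> bool" where
  "is_path E V a b ps \<longleftrightarrow> is_walk E V ps \<and> distinct ps \<and> hd ps = a \<and> last ps = b"

definition connected_in :: "('a \<Rightarrow> 'a \<Rightarrow> bool) \<Rightarrow> 'a set \<Rightarrow> bool" where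
  "connected_in E V \<longleftrightarrow> (\<forall>a\<in>V. \<forall>b\<in>V. \<exists>ps. is_path E V a b ps)"

definition has_cycle :: "('a \<Rightarrow> 'a \<Rightarrow> bool) \<Rightarrow> 'a set \<Rightarrow> bool" where
  "has_cycle E V \<longleftrightarrow> (\<exists>c. length c \<ge> 3 \<and> distinct c \<and> is_walk E V c \<and> E (last c) (hd c))"

definition is_tree :: "'a set \<Rightarrow> ('a \<Rightarrow> 'a \<Rightarrow> bool) \<Rightarrow> bool" where
  "is_tree V E \<longleftrightarrow> finite V \<and> V \<noteq> {} \<and>
     (\<forall>x y. E x y \<longrightarrow> x \<in> V \<and> y \<in> V) \<and>
     (\<forall>x y. E x y \<longrightarrow> E y x) \<and> (\<forall>x. \<not> E x x) \<and>
     connected_in E V \<and> \<not> has_cycle E V"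

definition components :: "('a \<Rightarrow> 'a \<Rightarrow> bool) \<Rightarrow> 'a set \<Rightarrow> 'a set set" where
  "components E S = {C. C \<noteq> {} \<and> C \<subseteq> S \<and> connected_in E C \<and>
                         (\<forall>x\<in>C. \<forall>y\<in>S. E x y \<longrightarrow> y \<in> C)}"

datatype 'a rtree = Node 'a "'a rtree list"

inductive valid_search_tree :: "('a \<Rightarrow> 'a \<Rightarrow> bool) \<Rightarrow> 'a set \<Rightarrow> 'a rtree \<Rightarrow> bool"
  for E where
  "\<lbrakk> r \<in> S; distinct (map set_rtree ts);
     set (map set_rtree ts) = components E (S - {r});
     \<forall>t\<in>set ts. valid_search_tree E (set_rtree t) t \<rbrakk>
   \<Longrightarrow> valid_search_tree E S (Node r ts)"

text \<open>Height = maximum number of nodes on a root-to-leaf path.\<close>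
fun height :: "'a rtree \<Rightarrow> nat" where
  "height (Node r ts) = Suc (Max (insert 0 (set (map height ts))))"

inductive root_path :: "'a rtree \<Rightarrow> 'a list \<Rightarrow> bool" where
  "root_path (Node r ts) [r]"
| "\<lbrakk> t \<in> set ts; root_path t p \<rbrakk> \<Longrightarrow> root_path (Node r ts) (r # p)"

definition path_verts :: "'a set \<Rightarrow> ('a \<Rightarrow> 'a \<Rightarrow> bool) \<Rightarrow> 'a \<Rightarrow> 'a \<Rightarrow> 'a set" where
  "path_verts V E a b = {x. \<exists>ps. is_path E V a b ps \<and> x \<in> set ps}"

definition hull_verts :: "'a set \<Rightarrow> ('a \<Rightarrow> 'a \<Rightarrow> bool) \<Rightarrow> 'a set \<Rightarrow> 'a set" where
  "hull_verts V E S = (\<Union>a\<in>S. \<Union>b\<in>S. path_verts V E a b)"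

definition steiner_closed :: "'a set \<Rightarrow> ('a \<Rightarrow> 'a \<Rightarrow> bool) \<Rightarrow> 'a set \<Rightarrow> bool" where
  "steiner_closed V E S \<longleftrightarrow>
     (\<forall>x \<in> hull_verts V E S - S. card {y \<in> hull_verts V E S. E x y} = 2)"

definition steiner_closed_search_tree :: "'a set \<Rightarrow> ('a \<Rightarrow> 'a \<Rightarrow> bool) \<Rightarrow> 'a rtree \<Rightarrow> bool" where
  "steiner_closed_search_tree V E T \<longleftrightarrow> (\<forall>p. root_path T p \<longrightarrow> steiner_closed V E (set p))"

end

theory Submission
  imports Defs
begin


definition reach :: "('a \<Rightarrow> 'a \<Rightarrow> bool) \<Rightarrow> 'a set \<Rightarrow> 'a \<Rightarrow> 'a \<Rightarrow> bool" where
  "reach R X a b \<longleftrightarrow> (\<lambda>u v. R u v \<and> u \<in> X \<and> v \<in> X)\<^sup>*\<^sup>* a b \<and> a \<in> X"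

lemma reach_in: "reach R X a b \<Longrightarrow> b \<in> X \<and> a \<in> X"
  unfolding reach_def
proof -
  assume h: "(\<lambda>u v. R u v \<and> u \<in> X \<and> v \<in> X)\<^sup>*\<^sup>* a b \<and> a \<in> X"
  have "(\<lambda>u v. R u v \<and> u \<in> X \<and> v \<in> X)\<^sup>*\<^sup>* a b \<Longrightarrow> a \<in> X \<Longrightarrow> b \<in> X"
    by (induction rule: rtranclp_induct) auto
  with h show "b \<in> X \<and> a \<in> X" by blast
qed

lemma reach_refl: "a \<in> X \<Longrightarrow> reach R X a a"
  unfolding reach_def by auto

lemma reach_step: "R a b \<Longrightarrow> a \<in> X \<Longrightarrow> b \<in> X \<Longrightarrow> reach R X a b"
  unfolding reach_def by auto

lemma reach_trans: "reach R X a b \<Longrightarrow> reach R X b c \<Longrightarrow> reach R X a c"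
  unfolding reach_def by auto

lemma reach_sym:
  assumes "\<And>x y. R x y \<Longrightarrow> R y x" "reach R X a b" shows "reach R X b a"
proof -
  have "(\<lambda>u v. R u v \<and> u \<in> X \<and> v \<in> X)\<^sup>*\<^sup>* a b \<Longrightarrow> a \<in> X \<Longrightarrow> reach R X b a"
  proof (induction rule: rtranclp_induct)
    case base then show ?case by (simp add: reach_refl)
  next
    case (step y z)
    have "R z y" using step(2) assms(1) by blast
    then have "reach R X z y" using step(2) by (blast intro: reach_step)
    then show ?case using step by (blast intro: reach_trans)
  qed
  then show ?thesis using assms(2) unfolding reach_def by blast
qed

lemma reach_mono_gen:
  assumes "reach R X a b" "\<And>u v. R u v \<Longrightarrow> u \<in> X \<Longrightarrow> v \<in> X \<Longrightarrow> R' u v" "X \<subseteq> Y"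
  shows "reach R' Y a b"
proof -
  have "(\<lambda>u v. R u v \<and> u \<in> X \<and> v \<in> X)\<^sup>*\<^sup>* a b \<Longrightarrow> a \<in> X \<Longrightarrow> reach R' Y a b"
  proof (induction rule: rtranclp_induct)
    case base
    have "a \<in> Y" using assms(3) base by blast
    then show ?case by (rule reach_refl)
  next
    case (step y z)
    have "R' y z \<and> y \<in> Y \<and> z \<in> Y" using assms(2,3) step(2) by blast
    then have "reach R' Y y z" by (blast intro: reach_step)
    then show ?case using step(3)[OF step(4)] by (blast intro: reach_trans)
  qed
  then show ?thesis using assms(1) unfolding reach_def by blast
qed

lemma reach_mono: "reach R X a b \<Longrightarrow> X \<subseteq> Y \<Longrightarrow> reach R Y a b"
  by (erule reach_mono_gen) auto

lemma reach_exit: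
  assumes "reach R X a b" "a \<in> Y" "b \<notin> Y"
  shows "\<exists>u u'. reach R X a u \<and> u \<in> Y \<and> u' \<in> X \<and> u' \<notin> Y \<and> R u u'"
proof -
  have "(\<lambda>u v. R u v \<and> u \<in> X \<and> v \<in> X)\<^sup>*\<^sup>* a b \<Longrightarrow> a \<in> X \<Longrightarrow> b \<notin> Y \<Longrightarrow> ?thesis"
  proof (induction rule: rtranclp_induct)
    case base then show ?case using assms(2) by blast
  next
    case (step y z)
    show ?case
    proof (cases "y \<in> Y")
      case True
      have "reach R X a y" using step unfolding reach_def by blast
      then show ?thesis using True step by blast
    next
      case False then show ?thesis using step by blast
    qed
  qed
  then show ?thesis using assms unfolding reach_def by blast
qed

lemma reach_restrict:
  assumes "reach R X a b" "\<And>z. reach R X a z \<Longrightarrow> z \<in> Y"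
  shows "reach R (X \<inter> Y) a b"
proof -
  have "(\<lambda>u v. R u v \<and> u \<in> X \<and> v \<in> X)\<^sup>*\<^sup>* a b \<Longrightarrow> a \<in> X \<Longrightarrow> reach R (X \<inter> Y) a b"
  proof (induction rule: rtranclp_induct)
    case base then show ?case using assms(2) reach_refl[of a X R] by (auto intro: reach_refl)
  next
    case (step y z)
    have ry: "reach R X a y" using step unfolding reach_def by auto
    have "reach R X a z" using step unfolding reach_def
      by (auto intro: rtranclp.rtrancl_into_rtrancl)
    then have "z \<in> Y" using assms(2) by blast
    moreover have "y \<in> Y" using ry assms(2) by blast
    ultimately have "reach R (X \<inter> Y) y z" using step by (auto intro: reach_step)
    then show ?case using step(3)[OF step(4)] by (rule reach_trans[rotated])
  qed
  then show ?thesis using assms unfolding reach_def by blast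
qed

lemma walk_single[simp]: "is_walk R X [x] \<longleftrightarrow> x \<in> X"
  unfolding is_walk_def by auto

lemma walk_Cons2[simp]: "is_walk R X (x # y # ps) \<longleftrightarrow> x \<in> X \<and> R x y \<and> is_walk R X (y # ps)"
proof
  assume h: "is_walk R X (x # y # ps)"
  have "\<forall>i. Suc i < length (y # ps) \<longrightarrow> R ((y # ps) ! i) ((y # ps) ! Suc i)"
  proof (intro allI impI)
    fix i assume "Suc i < length (y # ps)"
    then have "Suc (Suc i) < length (x # y # ps)" by simp
    then show "R ((y # ps) ! i) ((y # ps) ! Suc i)" using h unfolding is_walk_def
      by (metis nth_Cons_Suc)
  qed
  moreover have "R x y" using h unfolding is_walk_def
    by (metis length_Cons nth_Cons_0 nth_Cons_Suc Suc_less_eq zero_less_Suc)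
  ultimately show "x \<in> X \<and> R x y \<and> is_walk R X (y # ps)" using h unfolding is_walk_def
    by auto
next
  assume h: "x \<in> X \<and> R x y \<and> is_walk R X (y # ps)"
  show "is_walk R X (x # y # ps)" unfolding is_walk_def
  proof (intro conjI allI impI)
    show "set (x # y # ps) \<subseteq> X" using h unfolding is_walk_def by auto
  next
    fix i assume "Suc i < length (x # y # ps)"
    then show "R ((x # y # ps) ! i) ((x # y # ps) ! Suc i)"
      using h unfolding is_walk_def by (cases i) auto
  qed simp
qed

lemma walk_nonempty: "is_walk R X ps \<Longrightarrow> ps \<noteq> []"
  unfolding is_walk_def by auto

lemma walk_set: "is_walk R X ps \<Longrightarrow> set ps \<subseteq> X"
  unfolding is_walk_def by auto

lemma walk_restrict: "is_walk R X ps \<Longrightarrow> set ps \<subseteq> Y \<Longrightarrow> is_walk R Y ps"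
  unfolding is_walk_def by auto

lemma walk_remove: "is_walk R X ps \<Longrightarrow> x \<notin> set ps \<Longrightarrow> is_walk R (X - {x}) ps"
  unfolding is_walk_def by auto

lemma walk_mono_rel: "is_walk R X ps \<Longrightarrow> (\<And>u v. R u v \<Longrightarrow> R' u v) \<Longrightarrow> is_walk R' X ps"
  unfolding is_walk_def by auto

lemma walk_tl: "is_walk R X (x # q) \<Longrightarrow> q \<noteq> [] \<Longrightarrow> is_walk R X q"
  by (cases q) auto

lemma walk_suffix: "is_walk R X (pre @ q) \<Longrightarrow> q \<noteq> [] \<Longrightarrow> is_walk R X q"
proof (induction pre)
  case Nil then show ?case by simp
next
  case (Cons a pre)
  have "is_walk R X (pre @ q)" using Cons.prems walk_tl[of R X a "pre @ q"] by simp
  then show ?case using Cons by blast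
qed

lemma walk_prefix: "is_walk R X (p @ q) \<Longrightarrow> p \<noteq> [] \<Longrightarrow> is_walk R X p"
proof (induction p)
  case Nil then show ?case by simp
next
  case (Cons a p)
  show ?case
  proof (cases p)
    case Nil then show ?thesis using Cons.prems walk_set by fastforce
  next
    case (Cons b p')
    have w: "is_walk R X (a # b # (p' @ q))" using Cons.prems \<open>p = b # p'\<close> by simp
    then have "is_walk R X (p @ q)" using \<open>p = b # p'\<close> by simp
    then have "is_walk R X p" using Cons.IH \<open>p = b # p'\<close> by blast
    then show ?thesis using w \<open>p = b # p'\<close> by simp
  qed
qed

lemma walk_reach: "is_walk R X ps \<Longrightarrow> reach R X (hd ps) (last ps)"
proof (induction ps)
  case Nil then show ?case by (simp add: is_walk_def)
next
  case (Cons a ps)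
  show ?case
  proof (cases ps)
    case Nil then show ?thesis using Cons by (simp add: reach_refl)
  next
    case (Cons b ps')
    then have r1: "reach R X b (last ps)" using Cons.IH Cons.prems by auto
    have "a \<in> X" "R a b" "b \<in> X" using Cons.prems \<open>ps = b # ps'\<close> walk_set by fastforce+
    then have "reach R X a b" by (rule_tac reach_step)
    then show ?thesis using r1 \<open>ps = b # ps'\<close> by (auto intro: reach_trans)
  qed
qed

lemma reach_path: "reach R X a b \<Longrightarrow> \<exists>ps. is_path R X a b ps"
proof -
  assume h: "reach R X a b"
  have main: "(\<lambda>u v. R u v \<and> u \<in> X \<and> v \<in> X)\<^sup>*\<^sup>* a b \<Longrightarrow> b \<in> X \<Longrightarrow> \<exists>ps. is_path R X a b ps"
  proof (induction rule: converse_rtranclp_induct)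
    case base then show ?case by (auto simp: is_path_def intro!: exI[of _ "[b]"])
  next
    case (step a a')
    then obtain ps where ps: "is_path R X a' b ps" by blast
    show ?case
    proof (cases "a \<in> set ps")
      case True
      then obtain pre post where sp: "ps = pre @ a # post" by (meson split_list)
      have "is_path R X a b (a # post)"
        using ps sp walk_suffix[of R X pre "a # post"] unfolding is_path_def by auto
      then show ?thesis by blast
    next
      case False
      obtain ps' where "ps = a' # ps'" using ps unfolding is_path_def is_walk_def
        by (metis list.collapse)
      then have "is_walk R X (a # ps)" using ps step unfolding is_path_def
        by simp
      then have "is_path R X a b (a # ps)" using ps False unfolding is_path_def
        by (simp add: \<open>ps = a' # ps'\<close>)
      then show ?thesis by blast
    qed
  qed
  have "b \<in> X" using h reach_in by metis
  moreover have "(\<lambda>u v. R u v \<and> u \<in> X \<and> v \<in> X)\<^sup>*\<^sup>* a b" using h unfolding reach_def by (rule conjunct1)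
  ultimately show ?thesis by (rule main[rotated])
qed

lemma path_reach: "is_path R X a b ps \<Longrightarrow> reach R X a b"
  unfolding is_path_def using walk_reach[of R X ps] by auto




locale tr =
  fixes V :: "'a set" and E :: "'a \<Rightarrow> 'a \<Rightarrow> bool"
  assumes tree: "is_tree V E"
begin

abbreviation conn where "conn X \<equiv> reach E X"

lemma finV: "finite V" using tree unfolding is_tree_def by blast
lemma edge_in: "E x y \<Longrightarrow> x \<in> V \<and> y \<in> V" using tree unfolding is_tree_def by blast
lemma esym: "E x y \<Longrightarrow> E y x" using tree unfolding is_tree_def by blast
lemma irr: "\<not> E x x" using tree unfolding is_tree_def by blast
lemma acyc: "\<not> has_cycle E V" using tree unfolding is_tree_def by blast
lemma connV: "connected_in E V" using tree unfolding is_tree_def by blast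

lemma conn_sym: "conn X a b \<Longrightarrow> conn X b a"
  by (rule reach_sym[OF esym])

lemma conn_trans: "conn X a b \<Longrightarrow> conn X b c \<Longrightarrow> conn X a c"
  by (rule reach_trans)

lemma conn_step: "E a b \<Longrightarrow> a \<in> X \<Longrightarrow> b \<in> X \<Longrightarrow> conn X a b"
  by (rule reach_step)

lemma conn_refl: "a \<in> X \<Longrightarrow> conn X a a"
  by (rule reach_refl)

lemma conn_mono: "conn X a b \<Longrightarrow> X \<subseteq> Y \<Longrightarrow> conn Y a b"
  by (rule reach_mono)

lemma conn_in: "conn X a b \<Longrightarrow> a \<in> X \<and> b \<in> X"
  using reach_in by metis

lemma connected_iff: "connected_in E C \<longleftrightarrow> (\<forall>a\<in>C. \<forall>b\<in>C. conn C a b)"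
  unfolding connected_in_def using path_reach reach_path by metis

lemma V_conn: "a \<in> V \<Longrightarrow> b \<in> V \<Longrightarrow> conn V a b"
  using connV connected_iff by blast

lemma bridge:
  assumes e: "E v w" and h1: "conn (V - {w}) v k" and h2: "conn (V - {v}) k w"
  shows False
proof -
  define R' where "R' = (\<lambda>u u'. E u u' \<and> \<not> (u = v \<and> u' = w) \<and> \<not> (u = w \<and> u' = v))"
  have r1: "reach R' V v k"
    by (rule reach_mono_gen[OF h1]) (auto simp: R'_def)
  have r2: "reach R' V k w"
    by (rule reach_mono_gen[OF h2]) (auto simp: R'_def)
  obtain ps where ps: "is_path R' V v w ps" using reach_path[OF reach_trans[OF r1 r2]] by blast
  have vw: "v \<noteq> w" using e irr by blast
  have w: "is_walk R' V ps" and d: "distinct ps" and hd: "hd ps = v" and la: "last ps = w"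
    using ps unfolding is_path_def by auto
  have ne: "ps \<noteq> []" using w walk_nonempty by blast
  show False
  proof (cases ps)
    case Nil then show ?thesis using ne by simp
  next
    case (Cons x rest)
    show ?thesis
    proof (cases rest)
      case Nil then show ?thesis using Cons hd la vw by simp
    next
      case (Cons y rest')
      show ?thesis
      proof (cases rest')
        case Nil
        then have "R' v w" using w hd la \<open>ps = x # rest\<close> \<open>rest = y # rest'\<close> by simp
        then show ?thesis unfolding R'_def by blast
      next
        case (Cons z rest'')
        have "is_walk E V ps" using w by (rule walk_mono_rel) (simp add: R'_def)
        moreover have "length ps \<ge> 3" using \<open>ps = x # rest\<close> \<open>rest = y # rest'\<close> Cons by simp
        moreover have "E (last ps) (hd ps)" using hd la e esym by simp
        ultimately have "has_cycle E V" using d unfolding has_cycle_def by blast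
        then show ?thesis using acyc by blast
      qed
    qed
  qed
qed

lemma distinct_branch:
  assumes "E x y1" "E x y2" "y1 \<noteq> y2" "conn (V - {x}) y1 y2"
  shows False
proof -
  have "x \<noteq> y1" "x \<noteq> y2" using assms irr by auto
  then have "conn (V - {y2}) x y1" using assms edge_in by (auto intro!: reach_step)
  then show False using bridge[OF assms(2) _ assms(4)] by blast
qed

lemma split_path:
  assumes "is_path E X a b ps" "z \<in> set ps" "z \<noteq> a"
  obtains pre post where "ps = pre @ z # post" "pre \<noteq> []" "is_walk E X (pre @ [z])"
    "is_walk E X (z # post)" "a \<in> set pre" "distinct (pre @ z # post)" "hd pre = a"
    "last (z # post) = b"
proof -
  obtain pre post where sp: "ps = pre @ z # post" using assms(2) by (meson split_list)
  have "pre \<noteq> []" using sp assms(1,3) unfolding is_path_def by auto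
  moreover have "is_walk E X (z # post)" using assms(1) sp walk_suffix[of E X pre "z # post"]
    unfolding is_path_def by auto
  moreover have "is_walk E X (pre @ [z])" using assms(1) sp walk_prefix[of E X "pre @ [z]" post]
    unfolding is_path_def by auto
  moreover have "hd pre = a" using assms(1) sp \<open>pre \<noteq> []\<close> unfolding is_path_def by auto
  moreover have "a \<in> set pre" using \<open>hd pre = a\<close> \<open>pre \<noteq> []\<close> by auto
  moreover have "last (z # post) = b" using assms(1) sp unfolding is_path_def by auto
  ultimately show ?thesis using that sp assms(1) unfolding is_path_def by blast
qed

lemma sep_reach:
  assumes cX: "connected_in E X" and p: "p \<in> X" and q: "q \<in> X" and px: "p \<noteq> x"
    and ns: "\<not> conn (X - {x}) p q"
  shows "conn (X - {p}) x q"
proof -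
  obtain ps where ps: "is_path E X p q ps" using cX p q unfolding connected_in_def by blast
  have "x \<in> set ps"
  proof (rule ccontr)
    assume "x \<notin> set ps"
    then have "is_walk E (X - {x}) ps" using ps walk_set[of E X ps]
      unfolding is_path_def by (auto intro: walk_restrict)
    then have "conn (X - {x}) p q" using ps walk_reach unfolding is_path_def by metis
    then show False using ns by blast
  qed
  then obtain pre post where sp: "ps = pre @ x # post" "is_walk E X (x # post)" "p \<in> set pre"
    "distinct (pre @ x # post)" "last (x # post) = q"
    using split_path[OF ps _ px[symmetric]] by metis
  have "p \<notin> set (x # post)" using sp(3,4) by auto
  then have "is_walk E (X - {p}) (x # post)" using sp(2) by (rule walk_remove[rotated])
  then show ?thesis using walk_reach sp(5) by fastforce
qed

lemma interior_sep:
  assumes ps: "is_path E V a b ps" and z: "z \<in> set ps" "z \<noteq> a" "z \<noteq> b"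
  shows "\<not> conn (V - {z}) a b"
proof
  assume c: "conn (V - {z}) a b"
  obtain pre post where sp: "ps = pre @ z # post" "is_walk E V (pre @ [z])" "is_walk E V (z # post)"
    "distinct (pre @ z # post)" "last (z # post) = b" "hd pre = a" "pre \<noteq> []"
    using split_path[OF ps z(1,2)] by metis
  have "post \<noteq> []" using sp(5) z(3) by auto
  then obtain y post' where py: "post = y # post'" by (cases post) auto
  have ezy: "E z y" using sp(3) py by simp
  have "y \<notin> set (pre @ [z])" using sp(4) py by auto
  then have "is_walk E (V - {y}) (pre @ [z])" using sp(2) by (rule walk_remove[rotated])
  then have r1: "conn (V - {y}) a z" using walk_reach sp(6,7) by fastforce
  have "z \<notin> set post" using sp(4) by auto
  have "is_walk E V post" using sp(3) py by simp
  then have "is_walk E (V - {z}) post" using \<open>z \<notin> set post\<close> by (rule walk_remove)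
  then have r2: "conn (V - {z}) y b" using walk_reach sp(5) py \<open>post \<noteq> []\<close> by fastforce
  have "conn (V - {z}) a y" using reach_trans[OF c conn_sym[OF r2]] .
  then show False using bridge[OF ezy conn_sym[OF r1]] by blast
qed

lemma first_step:
  assumes "x \<in> V" "a \<in> V" "x \<noteq> a"
  shows "\<exists>y. E x y \<and> conn (V - {x}) y a"
proof -
  obtain ps where ps: "is_path E V x a ps" using connV assms unfolding connected_in_def by blast
  obtain y rest where py: "ps = x # y # rest"
    using ps assms(3) unfolding is_path_def is_walk_def
    by (metis hd_Cons_tl last_ConsL)
  have w: "is_walk E V (y # rest)" and exy: "E x y" using ps py unfolding is_path_def by auto
  have "x \<notin> set (y # rest)" using ps py unfolding is_path_def by auto
  then have "is_walk E (V - {x}) (y # rest)" using w by (rule walk_remove[rotated])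
  then have "conn (V - {x}) y a" using walk_reach[of E "V - {x}" "y # rest"] ps py
    unfolding is_path_def by simp
  then show ?thesis using exy by blast
qed

end



lemma three_elems:
  assumes "finite N" "\<And>y1 y2 y3. y1 \<in> N \<Longrightarrow> y2 \<in> N \<Longrightarrow> y3 \<in> N \<Longrightarrow> y1 = y2 \<or> y1 = y3 \<or> y2 = y3"
  shows "card N \<le> 2"
proof (rule ccontr)
  assume "\<not> card N \<le> 2"
  then have c: "card N \<ge> 3" by simp
  then obtain y1 where y1: "y1 \<in> N" by fastforce
  have "card (N - {y1}) \<ge> 2" using c y1 assms(1) by simp
  then have "N - {y1} \<noteq> {}" by (cases "N - {y1} = {}") auto
  then obtain y2 where y2: "y2 \<in> N - {y1}" by blast
  have "card (N - {y1} - {y2}) \<ge> 1" using \<open>card (N - {y1}) \<ge> 2\<close> y2 assms(1) by simp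
  then have "N - {y1} - {y2} \<noteq> {}" by (cases "N - {y1} - {y2} = {}") auto
  then obtain y3 where y3: "y3 \<in> N - {y1} - {y2}" by blast
  show False using assms(2)[of y1 y2 y3] y1 y2 y3 by blast
qed

context tr begin

lemma comp_sub: "C \<in> components E S \<Longrightarrow> C \<subseteq> S \<and> C \<noteq> {}"
  unfolding components_def by blast

lemma comp_closed: "C \<in> components E S \<Longrightarrow> x \<in> C \<Longrightarrow> y \<in> S \<Longrightarrow> E x y \<Longrightarrow> y \<in> C"
  unfolding components_def by blast

lemma comp_conn: "C \<in> components E S \<Longrightarrow> x \<in> C \<Longrightarrow> y \<in> C \<Longrightarrow> conn C x y"
proof -
  assume "C \<in> components E S" "x \<in> C" "y \<in> C"
  then have "connected_in E C" unfolding components_def by blast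
  then show "conn C x y" using \<open>x \<in> C\<close> \<open>y \<in> C\<close> unfolding connected_iff by blast
qed

lemma comp_class:
  assumes C: "C \<in> components E S" and x: "x \<in> C"
  shows "C = {z. conn S x z}"
proof
  show "C \<subseteq> {z. conn S x z}"
  proof
    fix z assume "z \<in> C"
    then have "conn C x z" using comp_conn[OF C x] by blast
    then show "z \<in> {z. conn S x z}" using comp_sub[OF C] reach_mono[of E C x z S] by blast
  qed
next
  show "{z. conn S x z} \<subseteq> C"
  proof
    fix z assume "z \<in> {z. conn S x z}"
    then have r: "conn S x z" by simp
    show "z \<in> C"
    proof (rule ccontr)
      assume "z \<notin> C"
      then obtain u u' where "u \<in> C" "u' \<in> S" "u' \<notin> C" "E u u'"
        using reach_exit[OF r x] by blast
      then show False using comp_closed[OF C] by blast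
    qed
  qed
qed

lemma class_comp:
  assumes a: "a \<in> S"
  shows "{z. conn S a z} \<in> components E S"
proof -
  let ?K = "{z. conn S a z}"
  have inK: "conn ?K a b" if "conn S a b" for b
  proof -
    have "conn (S \<inter> ?K) a b" using reach_restrict[OF that, of ?K] by blast
    moreover have "S \<inter> ?K = ?K" by (auto dest: reach_in)
    ultimately show ?thesis by simp
  qed
  have "?K \<noteq> {}" using a reach_refl[of a S E] by blast
  moreover have "?K \<subseteq> S" using reach_in[of E S a] by blast
  moreover have "connected_in E ?K"
    unfolding connected_iff
  proof (intro ballI)
    fix b c assume "b \<in> ?K" "c \<in> ?K"
    then have "conn ?K a b" "conn ?K a c" using inK by auto
    then show "conn ?K b c" using conn_sym reach_trans by metis
  qed
  moreover have "\<forall>x\<in>?K. \<forall>y\<in>S. E x y \<longrightarrow> y \<in> ?K"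
  proof (intro ballI impI)
    fix x y assume "x \<in> ?K" "y \<in> S" "E x y"
    then have "conn S a x" "conn S x y" by (auto dest: reach_in intro: reach_step)
    then show "y \<in> ?K" using reach_trans by fastforce
  qed
  ultimately show ?thesis unfolding components_def by blast
qed

lemma comp_Union: "\<Union> (components E S) = S"
proof
  show "\<Union> (components E S) \<subseteq> S" using comp_sub by blast
  show "S \<subseteq> \<Union> (components E S)"
  proof
    fix x assume "x \<in> S"
    then have "{z. conn S x z} \<in> components E S" "x \<in> {z. conn S x z}"
      using class_comp[of x S] reach_refl[of x S E] by auto
    then show "x \<in> \<Union> (components E S)" by blast
  qed
qed

lemma comp_finite: "finite S \<Longrightarrow> finite (components E S)"
  by (rule finite_subset[of _ "Pow S"]) (auto dest: comp_sub)

lemma comp_eq: "C \<in> components E S \<Longrightarrow> D \<in> components E S \<Longrightarrow> x \<in> C \<Longrightarrow> x \<in> D \<Longrightarrow> C = D"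
  using comp_class[of C S x] comp_class[of D S x] by simp

lemma V_comp: "V \<in> components E V"
proof -
  obtain a where "a \<in> V" using tree unfolding is_tree_def by blast
  then have "{z. conn V a z} \<in> components E V" by (rule class_comp)
  moreover have "{z. conn V a z} = V" using V_conn \<open>a \<in> V\<close> reach_in[of E V a] by blast
  ultimately show ?thesis by simp
qed

lemma pv_in: "x \<in> path_verts V E a b \<Longrightarrow> a \<in> V \<and> b \<in> V \<and> x \<in> V"
proof -
  assume "x \<in> path_verts V E a b"
  then obtain ps where ps: "is_path E V a b ps" "x \<in> set ps" unfolding path_verts_def by blast
  then have "ps \<noteq> []" "set ps \<subseteq> V" "hd ps = a" "last ps = b"
    unfolding is_path_def is_walk_def by auto
  then show ?thesis using ps(2) hd_in_set last_in_set by blast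
qed

lemma pv_of_sep:
  assumes "a \<in> V" "b \<in> V" "\<not> conn (V - {x}) a b"
  shows "x \<in> path_verts V E a b"
proof -
  obtain ps where ps: "is_path E V a b ps" using connV assms unfolding connected_in_def by blast
  have "x \<in> set ps"
  proof (rule ccontr)
    assume "x \<notin> set ps"
    then have "is_walk E (V - {x}) ps" using ps unfolding is_path_def by (blast intro: walk_remove)
    then have "is_path E (V - {x}) a b ps" using ps unfolding is_path_def by blast
    then have "conn (V - {x}) a b" by (rule path_reach)
    then show False using assms by blast
  qed
  then show ?thesis using ps unfolding path_verts_def by blast
qed

lemma pv_sep: "x \<in> path_verts V E a b \<Longrightarrow> x = a \<or> x = b \<or> \<not> conn (V - {x}) a b"
proof -
  assume "x \<in> path_verts V E a b"
  then obtain ps where ps: "is_path E V a b ps" "x \<in> set ps" unfolding path_verts_def by blast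
  show ?thesis using interior_sep[OF ps] by blast
qed

lemma pv_self: "a \<in> V \<Longrightarrow> a \<in> path_verts V E a a"
proof -
  assume "a \<in> V"
  then have "is_path E V a a [a]" unfolding is_path_def by simp
  then show ?thesis unfolding path_verts_def by force
qed

definition br :: "'a \<Rightarrow> 'a \<Rightarrow> 'a set \<Rightarrow> bool" where
  "br x y S \<longleftrightarrow> (\<exists>s\<in>S. conn (V - {x}) y s)"

definition ok :: "'a set \<Rightarrow> bool" where
  "ok S \<longleftrightarrow> S \<subseteq> V \<and> (\<forall>x\<in>V - S. \<forall>y1 y2 y3. E x y1 \<and> E x y2 \<and> E x y3 \<and>
      br x y1 S \<and> br x y2 S \<and> br x y3 S \<longrightarrow> y1 = y2 \<or> y1 = y3 \<or> y2 = y3)"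

lemma ok_steiner:
  assumes ok: "ok S"
  shows "steiner_closed V E S"
  unfolding steiner_closed_def
proof
  fix x assume xh: "x \<in> hull_verts V E S - S"
  have SV: "S \<subseteq> V" using ok unfolding ok_def by blast
  obtain a b where ab: "a \<in> S" "b \<in> S" "x \<in> path_verts V E a b"
    using xh unfolding hull_verts_def by blast
  have xV: "x \<in> V" using pv_in[OF ab(3)] by blast
  have xS: "x \<notin> S" using xh by blast
  have sab: "\<not> conn (V - {x}) a b" using pv_sep[OF ab(3)] ab xS by blast
  let ?N = "{y. E x y \<and> br x y S}"
  have eq: "{y \<in> hull_verts V E S. E x y} = ?N"
  proof (intro set_eqI iffI)
    fix y assume y: "y \<in> {y \<in> hull_verts V E S. E x y}"
    then obtain a' b' where ab': "a' \<in> S" "b' \<in> S" "y \<in> path_verts V E a' b'" "E x y"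
      unfolding hull_verts_def by blast
    have yV: "y \<in> V" "y \<noteq> x" using edge_in[OF ab'(4)] irr ab'(4) by auto
    show "y \<in> ?N"
    proof (cases "y = a' \<or> y = b'")
      case True
      then have "conn (V - {x}) y y" using yV by (auto intro: reach_refl)
      then show ?thesis using True ab' unfolding br_def by auto
    next
      case False
      then have ns: "\<not> conn (V - {y}) a' b'" using pv_sep[OF ab'(3)] by blast
      show ?thesis
      proof (rule ccontr)
        assume "y \<notin> ?N"
        then have n1: "\<not> conn (V - {x}) y a'" "\<not> conn (V - {x}) y b'"
          using ab' unfolding br_def by auto
        have "conn (V - {y}) x a'" using sep_reach[OF connV yV(1) _ yV(2) n1(1)] SV ab' by blast
        moreover have "conn (V - {y}) x b'" using sep_reach[OF connV yV(1) _ yV(2) n1(2)] SV ab' by blast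
        ultimately have "conn (V - {y}) a' b'" by (meson conn_sym conn_trans)
        then show False using ns by blast
      qed
    qed
  next
    fix y assume "y \<in> ?N"
    then obtain s where y: "E x y" "s \<in> S" "conn (V - {x}) y s" unfolding br_def by blast
    have yV: "y \<in> V" "y \<noteq> x" using edge_in[OF y(1)] irr y(1) by auto
    show "y \<in> {y \<in> hull_verts V E S. E x y}"
    proof (cases "y \<in> S")
      case True then show ?thesis using pv_self yV y(1) unfolding hull_verts_def by blast
    next
      case False
      have "\<not> conn (V - {x}) y a \<or> \<not> conn (V - {x}) y b"
        using sab by (meson conn_sym conn_trans)
      then obtain t where t: "t \<in> S" "\<not> conn (V - {x}) y t"
        using ab by blast
      have "\<not> conn (V - {y}) s t"
      proof
        assume c: "conn (V - {y}) s t"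
        have "conn (V - {y}) x t" using sep_reach[OF connV yV(1) _ yV(2) t(2)] SV t by blast
        then have "conn (V - {y}) x s" using c by (meson conn_sym conn_trans)
        then show False using bridge[OF y(1) _ conn_sym[OF y(3)]] by blast
      qed
      then have "y \<in> path_verts V E s t" using pv_of_sep SV y(2) t(1) by blast
      then show ?thesis using y t unfolding hull_verts_def by blast
    qed
  qed
  have "?N \<subseteq> V" using edge_in by blast
  then have finN: "finite ?N" using finV by (rule finite_subset)
  have okx: "\<forall>y1 y2 y3. E x y1 \<and> E x y2 \<and> E x y3 \<and>
      br x y1 S \<and> br x y2 S \<and> br x y3 S \<longrightarrow> y1 = y2 \<or> y1 = y3 \<or> y2 = y3"
    using ok xV xS unfolding ok_def by blast
  have le: "card ?N \<le> 2"
  proof (rule three_elems[OF finN])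
    fix y1 y2 y3 assume "y1 \<in> ?N" "y2 \<in> ?N" "y3 \<in> ?N"
    then show "y1 = y2 \<or> y1 = y3 \<or> y2 = y3" using okx by simp
  qed
  have "x \<noteq> a" "x \<noteq> b" using ab xS by auto
  obtain ya where ya: "E x ya" "conn (V - {x}) ya a" using first_step xV SV ab \<open>x \<noteq> a\<close> by blast
  obtain yb where yb: "E x yb" "conn (V - {x}) yb b" using first_step xV SV ab \<open>x \<noteq> b\<close> by blast
  have "ya \<noteq> yb" using ya(2) yb(2) sab by (meson conn_sym conn_trans)
  moreover have "ya \<in> ?N" "yb \<in> ?N" using ya yb ab unfolding br_def by auto
  ultimately have "{ya, yb} \<subseteq> ?N" "card {ya, yb} = 2" by auto
  then have "card {ya, yb} \<le> card ?N" "card {ya, yb} = 2"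
    using card_mono[OF finN, of "{ya, yb}"] by blast+
  then have "card ?N \<ge> 2" by simp
  then show "card {y \<in> hull_verts V E S. E x y} = 2" using le eq by simp
qed

end



context tr begin

definition bd :: "'a set \<Rightarrow> 'a set \<Rightarrow> 'a set" where
  "bd A C = {b \<in> A. \<exists>c\<in>C. E c b}"

lemma sub_comp:
  assumes C: "C \<in> components E (V - A)" and v: "v \<in> C" and D: "D \<in> components E (C - {v})"
  shows "D \<in> components E (V - (A \<union> {v}))"
proof -
  have D1: "D \<noteq> {}" "D \<subseteq> C - {v}" "connected_in E D" "\<forall>x\<in>D. \<forall>y\<in>C - {v}. E x y \<longrightarrow> y \<in> D"
    using D unfolding components_def by auto
  have CS: "C \<subseteq> V - A" using comp_sub[OF C] by blast
  have "\<forall>x\<in>D. \<forall>y\<in>V - (A \<union> {v}). E x y \<longrightarrow> y \<in> D"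
  proof (intro ballI impI)
    fix x y assume "x \<in> D" "y \<in> V - (A \<union> {v})" "E x y"
    then have "y \<in> C" using comp_closed[OF C, of x y] D1(2) by blast
    then show "y \<in> D" using D1(4) \<open>x \<in> D\<close> \<open>E x y\<close> \<open>y \<in> V - (A \<union> {v})\<close> by blast
  qed
  moreover have "D \<subseteq> V - (A \<union> {v})" using D1(2) CS by blast
  ultimately show ?thesis using D1 unfolding components_def by blast
qed

lemma same_target:
  assumes "E x y1" "E x y2" "y1 \<noteq> y2" "conn (V - {x}) y1 t" "conn (V - {x}) y2 t"
  shows False
proof -
  have "conn (V - {x}) y1 y2" using assms(4,5) by (meson conn_sym conn_trans)
  then show False using distinct_branch assms(1-3) by blast
qed

lemma three_targets:
  assumes "E x y1" "E x y2" "E x y3" "y1 \<noteq> y2" "y1 \<noteq> y3" "y2 \<noteq> y3"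
    "t1 \<in> W" "t2 \<in> W" "t3 \<in> W"
    "conn (V - {x}) y1 t1" "conn (V - {x}) y2 t2" "conn (V - {x}) y3 t3"
    "finite W" "card W \<le> 2"
  shows False
proof -
  have "t1 \<noteq> t2" using same_target[OF assms(1,2,4) assms(10)] assms(11) by blast
  moreover have "t1 \<noteq> t3" using same_target[OF assms(1,3,5) assms(10)] assms(12) by blast
  moreover have "t2 \<noteq> t3" using same_target[OF assms(2,3,6) assms(11)] assms(12) by blast
  ultimately have "card {t1, t2, t3} = 3" by simp
  moreover have "card {t1, t2, t3} \<le> card W" using card_mono[OF assms(13), of "{t1, t2, t3}"] assms(7-9) by blast
  ultimately show False using assms(14) by simp
qed

lemma to_bd:
  assumes C: "C \<in> components E (V - A)" and x: "x \<in> C" and e: "E x y"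
    and r: "conn (V - {x}) y s" and s: "s \<in> A"
  shows "\<exists>b\<in>bd A C. conn (V - {x}) y b"
proof (cases "y \<in> A")
  case True
  then have "y \<in> bd A C" using x e unfolding bd_def by blast
  moreover have "conn (V - {x}) y y" using reach_in[OF r] by (blast intro: reach_refl)
  ultimately show ?thesis by blast
next
  case False
  have yV: "y \<in> V" using edge_in[OF e] by blast
  then have yC: "y \<in> C" using comp_closed[OF C x, of y] e False by blast
  have "s \<notin> C" using comp_sub[OF C] s by blast
  then obtain u u' where uu: "conn (V - {x}) y u" "u \<in> C" "u' \<in> V - {x}" "u' \<notin> C" "E u u'"
    using reach_exit[OF r yC] by blast
  have "u' \<in> A" using comp_closed[OF C uu(2), of u'] uu by blast
  then have "u' \<in> bd A C" using uu unfolding bd_def by blast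
  moreover have "conn (V - {x}) y u'"
    using uu reach_in[OF uu(1)] by (blast intro: conn_trans reach_step)
  ultimately show ?thesis by blast
qed

lemma bd_finite: "A \<subseteq> V \<Longrightarrow> finite (bd A C)"
  unfolding bd_def using finV by (auto intro: finite_subset)

lemma add_ok:
  assumes ok: "ok A" and C: "C \<in> components E (V - A)" and v: "v \<in> C"
    and cond: "card (bd A C) \<le> 1 \<or> (\<exists>b1 b2. bd A C = {b1, b2} \<and> \<not> conn (V - {v}) b1 b2)"
  shows "ok (A \<union> {v})"
proof -
  have AV: "A \<subseteq> V" using ok unfolding ok_def by blast
  have CS: "C \<subseteq> V - A" using comp_sub[OF C] by blast
  have vV: "v \<in> V" "v \<notin> A" using CS v by auto
  have main: False if x: "x \<in> V - (A \<union> {v})" and ys: "E x y1" "E x y2" "E x y3"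
    "y1 \<noteq> y2" "y1 \<noteq> y3" "y2 \<noteq> y3" and bs: "br x y1 (A \<union> {v})" "br x y2 (A \<union> {v})" "br x y3 (A \<union> {v})"
    for x y1 y2 y3
  proof (cases "x \<in> C")
    case False
    show False
    proof (cases "A = {}")
      case True
      then have "conn (V - {x}) y1 v" "conn (V - {x}) y2 v" using bs(1,2) unfolding br_def by auto
      then show False using same_target[OF ys(1,2,4)] by blast
    next
      case False
      then obtain a where a: "a \<in> A" by blast
      have "conn V v a" using V_conn vV AV a by blast
      moreover have "a \<notin> C" using a CS by blast
      ultimately obtain u u' where uu: "u \<in> C" "u' \<in> V" "u' \<notin> C" "E u u'"
        using reach_exit[of E V v a C] v by blast
      have u'A: "u' \<in> A" using comp_closed[OF C uu(1), of u'] uu by blast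
      have "conn C v u" using comp_conn[OF C v uu(1)] .
      moreover have "C \<subseteq> V - {x}" using CS \<open>x \<notin> C\<close> by blast
      ultimately have c1: "conn (V - {x}) v u" by (rule reach_mono)
      have i1: "u \<in> V - {x}" using uu(1) CS \<open>x \<notin> C\<close> by blast
      have "u' \<noteq> x" using u'A x by (auto simp only: Diff_iff Un_iff)
      then have i2: "u' \<in> V - {x}" using uu(2) by (intro DiffI) auto
      have "conn (V - {x}) u u'" by (rule conn_step[OF uu(4) i1 i2])
      with c1 have vu': "conn (V - {x}) v u'" by (rule conn_trans)
      have brA: "br x y A" if hb: "br x y (A \<union> {v})" for y
      proof -
        obtain s where s: "s \<in> A \<union> {v}" "conn (V - {x}) y s" using hb unfolding br_def by blast
        show ?thesis
        proof (cases "s = v")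
          case True
          then have "conn (V - {x}) y v" using s(2) by simp
          then have "conn (V - {x}) y u'" using vu' by (rule conn_trans)
          then show ?thesis using u'A unfolding br_def by blast
        next
          case False then show ?thesis using s unfolding br_def by blast
        qed
      qed
      have "x \<in> V - A" using x by blast
      have okx: "\<forall>y1 y2 y3. E x y1 \<and> E x y2 \<and> E x y3 \<and>
        br x y1 A \<and> br x y2 A \<and> br x y3 A \<longrightarrow> y1 = y2 \<or> y1 = y3 \<or> y2 = y3"
        using ok \<open>x \<in> V - A\<close> unfolding ok_def by blast
      then show False using ys brA[OF bs(1)] brA[OF bs(2)] brA[OF bs(3)] by blast
    qed
  next
    case True
    have xnv: "x \<noteq> v" using x by blast
    have tgt: "\<exists>t\<in>bd A C \<union> {v}. conn (V - {x}) y t" if hb: "E x y" "br x y (A \<union> {v})" for y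
    proof -
      obtain s where s: "s \<in> A \<union> {v}" "conn (V - {x}) y s" using hb(2) unfolding br_def by blast
      show ?thesis
      proof (cases "s = v")
        case True then have "conn (V - {x}) y v" using s by simp
        then show ?thesis by blast
      next
        case False
        then have "s \<in> A" using s by blast
        then show ?thesis using to_bd[OF C True hb(1) s(2)] by blast
      qed
    qed
    obtain t1 where t1: "t1 \<in> bd A C \<union> {v}" "conn (V - {x}) y1 t1" using tgt ys bs by blast
    obtain t2 where t2: "t2 \<in> bd A C \<union> {v}" "conn (V - {x}) y2 t2" using tgt ys bs by blast
    obtain t3 where t3: "t3 \<in> bd A C \<union> {v}" "conn (V - {x}) y3 t3" using tgt ys bs by blast
    have finW: "finite (bd A C \<union> {v})" using bd_finite[OF AV] by blast
    show False
    proof (cases "card (bd A C) \<le> 1")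
      case True
      have "card (bd A C \<union> {v}) \<le> 2"
        using card_Un_le[of "bd A C" "{v}"] True by simp
      then show False using three_targets[OF ys t1(1) t2(1) t3(1) t1(2) t2(2) t3(2) finW] by blast
    next
      case False
      then obtain b1 b2 where bb: "bd A C = {b1, b2}" "\<not> conn (V - {v}) b1 b2" using cond by blast
      have b12V: "b1 \<in> V" "b2 \<in> V" using bb(1) AV unfolding bd_def by auto
      have up: "\<exists>t\<in>{b1, b2}. conn (V - {x}) y t" if "E x y" "t \<in> bd A C \<union> {v}" "conn (V - {x}) y t" for y t
      proof (cases "t = v")
        case False then show ?thesis using that bb(1) by blast
      next
        case True
        show ?thesis
        proof (rule ccontr)
          assume "\<not> ?thesis"
          then have n: "\<not> conn (V - {x}) y b1" "\<not> conn (V - {x}) y b2" by auto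
          have "conn (V - {x}) y v" using that(3) True by simp
          then have "\<not> conn (V - {x}) v b1" using n(1) conn_trans by blast
          then have c1: "conn (V - {v}) x b1" using sep_reach[OF connV vV(1) b12V(1)] xnv[symmetric] by blast
          have "conn (V - {x}) y v" using that(3) True by simp
          then have "\<not> conn (V - {x}) v b2" using n(2) conn_trans by blast
          then have c2: "conn (V - {v}) x b2" using sep_reach[OF connV vV(1) b12V(2)] xnv[symmetric] by blast
          have "conn (V - {v}) b1 b2" using c1 c2 by (meson conn_sym conn_trans)
          then show False using bb(2) by blast
        qed
      qed
      obtain s1 where s1: "s1 \<in> {b1, b2}" "conn (V - {x}) y1 s1" using up[OF ys(1) t1] by blast
      obtain s2 where s2: "s2 \<in> {b1, b2}" "conn (V - {x}) y2 s2" using up[OF ys(2) t2] by blast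
      obtain s3 where s3: "s3 \<in> {b1, b2}" "conn (V - {x}) y3 s3" using up[OF ys(3) t3] by blast
      have "card {b1, b2} \<le> 2" by (simp add: card_insert_if)
      then show False using three_targets[OF ys s1(1) s2(1) s3(1) s1(2) s2(2) s3(2)] by blast
    qed
  qed
  show ?thesis unfolding ok_def
  proof (intro conjI ballI allI impI)
    show "A \<union> {v} \<subseteq> V" using AV vV by blast
  next
    fix x y1 y2 y3 assume "x \<in> V - (A \<union> {v})"
      "E x y1 \<and> E x y2 \<and> E x y3 \<and> br x y1 (A \<union> {v}) \<and> br x y2 (A \<union> {v}) \<and> br x y3 (A \<union> {v})"
    then show "y1 = y2 \<or> y1 = y3 \<or> y2 = y3" using main[of x y1 y2 y3] by blast
  qed
qed

end



context tr begin

lemma conn_sub_V: "conn X a b \<Longrightarrow> X \<subseteq> Y \<Longrightarrow> conn Y a b" by (rule reach_mono)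

lemma centroid:
  assumes CV: "C \<subseteq> V" and cC: "connected_in E C" and ne: "C \<noteq> {}"
  shows "\<exists>v\<in>C. \<forall>D\<in>components E (C - {v}). 2 * card D \<le> card C"
proof -
  have finC: "finite C" using CV finV by (rule finite_subset)
  have Cc: "conn C a b" if "a \<in> C" "b \<in> C" for a b using cC that unfolding connected_iff by blast
  define M where "M v = Max (insert 0 (card ` components E (C - {v})))" for v
  have finM: "finite (insert 0 (card ` components E (C - {v})))" for v
    using comp_finite[of "C - {v}"] finC by simp
  obtain a where a: "a \<in> C" using ne by blast
  obtain v where v: "v \<in> C" and vmin: "\<And>y. y \<in> C \<Longrightarrow> M v \<le> M y"
    using ex_has_least_nat[of "\<lambda>v. v \<in> C" a M] a by blast
  show ?thesis
  proof (rule bexI[OF _ v], rule ballI, rule ccontr)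
    fix D assume D: "D \<in> components E (C - {v})" and big: "\<not> 2 * card D \<le> card C"
    have DC: "D \<subseteq> C - {v}" "D \<noteq> {}" using comp_sub[OF D] by auto
    have finD: "finite D" using DC finC finite_subset by blast
    have Dclosed: "\<And>x y. x \<in> D \<Longrightarrow> y \<in> C - {v} \<Longrightarrow> E x y \<Longrightarrow> y \<in> D"
      using comp_closed[OF D] by blast
    obtain d where d: "d \<in> D" using DC by blast
    have "conn C d v" using Cc d DC v by blast
    moreover have "v \<notin> D" using DC by blast
    ultimately obtain w u' where wu: "conn C d w" "w \<in> D" "u' \<in> C" "u' \<notin> D" "E w u'"
      using reach_exit[of E C d v D] d by blast
    have "u' = v" using Dclosed[OF wu(2), of u'] wu by blast
    then have ewv: "E w v" "E v w" using wu(5) esym by auto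
    have wC: "w \<in> C" "w \<noteq> v" using wu(2) DC by auto
    have cardD: "card D > 0" using finD DC by auto
    have "M v \<ge> card D" unfolding M_def using finM[of v] D by (auto intro: Max_ge)
    moreover have "M w < card D"
    proof -
      have "\<forall>k\<in>insert 0 (card ` components E (C - {w})). k < card D"
      proof
        fix k assume "k \<in> insert 0 (card ` components E (C - {w}))"
        then consider "k = 0" | K where "K \<in> components E (C - {w})" "k = card K" by blast
        then show "k < card D"
        proof cases
          case 1 then show ?thesis using cardD by simp
        next
          case 2
          note K = 2(1)
          have KC: "K \<subseteq> C - {w}" "K \<noteq> {}" using comp_sub[OF K] by auto
          have finK: "finite K" using KC finC finite_subset by blast
          show ?thesis
          proof (cases "v \<in> K")
            case True
            have "K \<inter> D = {}"
            proof (rule ccontr)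
              assume "K \<inter> D \<noteq> {}"
              then obtain k where k: "k \<in> K" "k \<in> D" by blast
              have "conn K v k" using comp_conn[OF K True k(1)] .
              then have r1: "conn (V - {w}) v k" using KC CV conn_sub_V[of K v k "V - {w}"] by blast
              have "conn D k w" using comp_conn[OF D k(2) wu(2)] .
              then have r2: "conn (V - {v}) k w" using DC CV conn_sub_V[of D k w "V - {v}"] by blast
              show False using bridge[OF ewv(2) r1 r2] .
            qed
            then have "K \<subseteq> C - D" using KC by blast
            then have "card K \<le> card (C - D)" using finC by (simp add: card_mono)
            also have "\<dots> = card C - card D" using card_Diff_subset[OF finD, of C] DC by blast
            finally show ?thesis using 2(2) big by linarith
          next
            case False
            obtain k0 where k0: "k0 \<in> K" using KC by blast
            have "conn C k0 w" using Cc k0 KC wC by blast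
            moreover have "w \<notin> K" using KC by blast
            ultimately obtain u u2 where uu: "conn C k0 u" "u \<in> K" "u2 \<in> C" "u2 \<notin> K" "E u u2"
              using reach_exit[of E C k0 w K] k0 by blast
            have "u2 = w" using comp_closed[OF K uu(2), of u2] uu by blast
            then have "E w u" using uu(5) esym by simp
            moreover have "u \<in> C - {v}" using uu(2) KC False by blast
            ultimately have uD: "u \<in> D" using Dclosed[OF wu(2)] by blast
            have "K \<subseteq> D"
            proof
              fix k assume k: "k \<in> K"
              show "k \<in> D"
              proof (rule ccontr)
                assume kD: "k \<notin> D"
                have "conn K u k" using comp_conn[OF K uu(2) k] .
                then have "conn (C - {w}) u k" using KC conn_sub_V by blast
                then obtain x x' where xx: "conn (C - {w}) u x" "x \<in> D" "x' \<in> C - {w}" "x' \<notin> D" "E x x'"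
                  using reach_exit[of E "C - {w}" u k D] uD kD by blast
                have "x' = v" using Dclosed[OF xx(2), of x'] xx by blast
                then have "conn (C - {w}) u v" using xx reach_in[OF xx(1)] conn_step[OF xx(5)] conn_trans
                  by (metis)
                then have "v \<in> K" using comp_class[OF K uu(2)] by blast
                then show False using False by blast
              qed
            qed
            then have "K \<subset> D" using KC wu(2) by blast
            then have "card K < card D" using finD by (rule psubset_card_mono[rotated])
            then show ?thesis using 2(2) by simp
          qed
        qed
      qed
      then show ?thesis unfolding M_def using finM[of w] by simp
    qed
    moreover have "M v \<le> M w" using vmin wC by blast
    ultimately show False by linarith
  qed
qed

end



context tr begin

lemma descent:
  assumes CV: "C \<subseteq> V" and cC: "connected_in E C"
    and b: "b1 \<in> V" "b2 \<in> V" "b1 \<notin> C" "b2 \<notin> C"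
    and c: "c1 \<in> C" "c2 \<in> C" "E c1 b1" "E c2 b2"
    and v: "v \<in> C" and sepv: "\<not> conn (V - {v}) b1 b2"
    and big: "2 * card {z. conn (C - {v}) c1 z} > card C"
  shows "\<exists>w\<in>C. \<not> conn (V - {w}) b1 b2 \<and> card {z. conn (C - {w}) c1 z} < card {z. conn (C - {v}) c1 z}
             \<and> card {z. conn (C - {w}) c2 z} < card {z. conn (C - {v}) c1 z}"
proof -
  define L where "L = {z. conn (C - {v}) c1 z}"
  have finC: "finite C" using CV finV by (rule finite_subset)
  have Cc: "conn C a b" if "a \<in> C" "b \<in> C" for a b using cC that unfolding connected_iff by blast
  have CvV: "C - {v} \<subseteq> V - {v}" using CV by blast
  have LC: "L \<subseteq> C - {v}" unfolding L_def using conn_in by blast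
  have finL: "finite L" using LC finC finite_subset by blast
  have "L \<noteq> {}" using big unfolding L_def[symmetric] by (metis card.empty mult_0_right not_less_zero)
  then obtain z0 where "z0 \<in> L" by blast
  then have "conn (C - {v}) c1 z0" unfolding L_def by blast
  then have c1v: "c1 \<noteq> v" using conn_in[of "C - {v}" c1 z0] by blast
  have c1L: "c1 \<in> L" unfolding L_def using conn_refl[of c1 "C - {v}"] c(1) c1v by blast
  have b1v: "b1 \<noteq> v" "b2 \<noteq> v" using b v by auto
  have Lb1: "conn (V - {v}) b1 z" if zL: "z \<in> L" for z
  proof -
    have "b1 \<in> V - {v}" "c1 \<in> V - {v}" using b c CV b1v c1v by auto
    then have "conn (V - {v}) b1 c1" by (rule conn_step[OF esym[OF c(3)]])
    moreover have "conn (C - {v}) c1 z" using zL unfolding L_def by blast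
    then have "conn (V - {v}) c1 z" using CvV by (rule conn_mono)
    ultimately show ?thesis by (rule conn_trans)
  qed
  have "conn C c1 v" using Cc c v by blast
  moreover have "v \<notin> L" using LC by blast
  ultimately obtain w u' where wu: "conn C c1 w" "w \<in> L" "u' \<in> C" "u' \<notin> L" "E w u'"
    using reach_exit[of E C c1 v L] c1L by blast
  have closedL: "x' \<in> L" if "x \<in> L" "x' \<in> C" "x' \<noteq> v" "E x x'" for x x'
  proof -
    have "x \<in> C - {v}" "x' \<in> C - {v}" using that LC by auto
    then have "conn (C - {v}) x x'" by (rule conn_step[OF that(4)])
    moreover have "conn (C - {v}) c1 x" using that(1) unfolding L_def by blast
    ultimately have "conn (C - {v}) c1 x'" using conn_trans by blast
    then show ?thesis unfolding L_def by blast
  qed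
  have "u' = v" using closedL[OF wu(2) wu(3) _ wu(5)] wu(4) by blast
  then have ewv: "E w v" "E v w" using wu(5) esym by auto
  have wC: "w \<in> C" "w \<noteq> v" using wu(2) LC by auto
  have c2L: "c2 \<notin> L"
  proof
    assume "c2 \<in> L"
    then have r1: "conn (V - {v}) b1 c2" by (rule Lb1)
    have "c2 \<in> V - {v}" using \<open>c2 \<in> L\<close> LC CV by blast
    moreover have "b2 \<in> V - {v}" using b1v b by auto
    ultimately have "conn (V - {v}) c2 b2" by (rule conn_step[OF c(4)])
    then have "conn (V - {v}) b1 b2" using r1 conn_trans by blast
    then show False using sepv by blast
  qed
  have sepw: "\<not> conn (V - {w}) b1 b2"
  proof
    assume h: "conn (V - {w}) b1 b2"
    have "\<not> conn (V - {v}) w b2"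
    proof
      assume "conn (V - {v}) w b2"
      then have "conn (V - {v}) b1 b2" using Lb1[OF wu(2)] conn_trans by blast
      then show False using sepv by blast
    qed
    then have "conn (V - {w}) v b2" using sep_reach[OF connV _ b(2), of w v] wC CV by blast
    then have r1: "conn (V - {w}) v b1" using conn_sym[OF h] conn_trans by blast
    have r2: "conn (V - {v}) b1 w" using Lb1[OF wu(2)] .
    show False using bridge[OF ewv(2) r1 r2] .
  qed
  define Lw where "Lw = {z. conn (C - {w}) c1 z}"
  define Rw where "Rw = {z. conn (C - {w}) c2 z}"
  have CwV: "C - {w} \<subseteq> V - {w}" using CV by blast
  have vLw: "v \<notin> Lw"
  proof
    assume "v \<in> Lw"
    then have "conn (C - {w}) c1 v" unfolding Lw_def by blast
    then have "conn (V - {w}) c1 v" using CwV by (rule conn_mono)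
    then have r1: "conn (V - {w}) v c1" by (rule conn_sym)
    have "conn (C - {v}) c1 w" using wu(2) unfolding L_def by blast
    then have r2: "conn (V - {v}) c1 w" using CvV by (rule conn_mono)
    show False using bridge[OF ewv(2) r1 r2] .
  qed
  have "Lw \<subseteq> L - {w}"
  proof
    fix z assume "z \<in> Lw"
    then have z: "conn (C - {w}) c1 z" unfolding Lw_def by blast
    have "\<And>y. conn (C - {w}) c1 y \<Longrightarrow> y \<in> - {v}" using vLw unfolding Lw_def by blast
    then have "conn ((C - {w}) \<inter> (- {v})) c1 z" using reach_restrict[OF z] by blast
    moreover have "(C - {w}) \<inter> (- {v}) \<subseteq> C - {v}" by blast
    ultimately have "conn (C - {v}) c1 z" by (rule conn_mono)
    moreover have "z \<noteq> w" using conn_in[OF z] by blast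
    ultimately show "z \<in> L - {w}" unfolding L_def by blast
  qed
  then have "Lw \<subset> L" using wu(2) by blast
  then have cLw: "card Lw < card L" using finL by (rule psubset_card_mono[rotated])
  have "Rw \<inter> L = {}"
  proof (rule ccontr)
    assume "Rw \<inter> L \<noteq> {}"
    then obtain z where z: "z \<in> Rw" "z \<in> L" by blast
    have "conn (C - {w}) c2 z" using z(1) unfolding Rw_def by blast
    then have zc: "conn (C - {w}) z c2" by (rule conn_sym)
    obtain x x' where xx: "conn (C - {w}) z x" "x \<in> L" "x' \<in> C - {w}" "x' \<notin> L" "E x x'"
      using reach_exit[OF zc z(2) c2L] by blast
    have "x' = v" using closedL[OF xx(2) _ _ xx(5)] xx(3,4) by blast
    then have evx: "E v x" using xx(5) esym by simp
    have xw: "x \<noteq> w" using conn_in[OF xx(1)] by blast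
    have "conn (C - {v}) c1 x" "conn (C - {v}) c1 w" using xx(2) wu(2) unfolding L_def by auto
    then have "conn (C - {v}) x w" using conn_sym conn_trans by blast
    then have "conn (V - {v}) x w" using CvV by (rule conn_mono)
    then show False using distinct_branch[OF evx ewv(2) xw] by blast
  qed
  moreover have "Rw \<subseteq> C" unfolding Rw_def using conn_in by blast
  ultimately have "Rw \<subseteq> C - L" by blast
  then have "card Rw \<le> card (C - L)" using finC by (simp add: card_mono)
  also have "\<dots> = card C - card L" using card_Diff_subset[OF finL, of C] LC by blast
  finally have cRw: "card Rw < card L" using big unfolding L_def[symmetric] by linarith
  show ?thesis using wC sepw cLw cRw unfolding L_def Lw_def Rw_def by blast
qed

end



context tr begin

lemma select2:
  assumes CV: "C \<subseteq> V" and cC: "connected_in E C"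
    and b: "b1 \<in> V" "b2 \<in> V" "b1 \<notin> C" "b2 \<notin> C" "b1 \<noteq> b2"
    and c: "c1 \<in> C" "c2 \<in> C" "E c1 b1" "E c2 b2"
  shows "\<exists>v\<in>C. \<not> conn (V - {v}) b1 b2 \<and> 2 * card {z. conn (C - {v}) c1 z} \<le> card C
           \<and> 2 * card {z. conn (C - {v}) c2 z} \<le> card C"
proof -
  have Cc: "conn C a b" if "a \<in> C" "b \<in> C" for a b using cC that unfolding connected_iff by blast
  have sepc1: "\<not> conn (V - {c1}) b1 b2"
  proof
    assume r1: "conn (V - {c1}) b1 b2"
    have "b2 \<in> V - {b1}" "c2 \<in> V - {b1}" using b c CV by auto
    then have s1: "conn (V - {b1}) b2 c2" by (rule conn_step[OF esym[OF c(4)]])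
    have "conn C c2 c1" using Cc c by blast
    moreover have "C \<subseteq> V - {b1}" using CV b by blast
    ultimately have "conn (V - {b1}) c2 c1" by (rule conn_mono)
    then have r2: "conn (V - {b1}) b2 c1" using s1 conn_trans by blast
    show False using bridge[OF esym[OF c(3)] r1 r2] .
  qed
  define f where "f v = max (card {z. conn (C - {v}) c1 z}) (card {z. conn (C - {v}) c2 z})" for v
  obtain v where v: "v \<in> C \<and> \<not> conn (V - {v}) b1 b2"
    and vmin: "\<And>y. y \<in> C \<and> \<not> conn (V - {y}) b1 b2 \<Longrightarrow> f v \<le> f y"
    using ex_has_least_nat[of "\<lambda>v. v \<in> C \<and> \<not> conn (V - {v}) b1 b2" c1 f] c sepc1 by blast
  have L: "2 * card {z. conn (C - {v}) c1 z} \<le> card C"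
  proof (rule ccontr)
    assume "\<not> ?thesis"
    then obtain w where w: "w \<in> C" "\<not> conn (V - {w}) b1 b2"
      "card {z. conn (C - {w}) c1 z} < card {z. conn (C - {v}) c1 z}"
      "card {z. conn (C - {w}) c2 z} < card {z. conn (C - {v}) c1 z}"
      using descent[OF CV cC b(1-4) c _ ] v by (meson not_le)
    have "f w < f v" unfolding f_def using w(3,4) by (simp add: less_max_iff_disj)
    then show False using vmin[of w] w by simp
  qed
  have R: "2 * card {z. conn (C - {v}) c2 z} \<le> card C"
  proof (rule ccontr)
    assume "\<not> ?thesis"
    moreover have "\<not> conn (V - {v}) b2 b1" using v conn_sym by blast
    ultimately obtain w where w: "w \<in> C" "\<not> conn (V - {w}) b2 b1"
      "card {z. conn (C - {w}) c2 z} < card {z. conn (C - {v}) c2 z}"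
      "card {z. conn (C - {w}) c1 z} < card {z. conn (C - {v}) c2 z}"
      using descent[OF CV cC b(2) b(1) b(4) b(3) c(2) c(1) c(4) c(3)] v by (meson not_le)
    have "\<not> conn (V - {w}) b1 b2" using w(2) conn_sym by blast
    moreover have "f w < f v" unfolding f_def using w(3,4) by (simp add: less_max_iff_disj)
    ultimately show False using vmin[of w] w by simp
  qed
  show ?thesis using v L R by blast
qed

end



lemma root_path_Node:
  "root_path (Node r ts) p \<Longrightarrow> p = [r] \<or> (\<exists>t\<in>set ts. \<exists>p'. root_path t p' \<and> p = r # p')"
  by (cases rule: root_path.cases) auto

context tr begin

lemma vst_set: "valid_search_tree E S T \<Longrightarrow> set_rtree T = S"
proof (induction rule: valid_search_tree.induct)
  case (1 r S ts)
  have "set_rtree (Node r ts) = insert r (\<Union>t\<in>set ts. set_rtree t)" by simp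
  also have "(\<Union>t\<in>set ts. set_rtree t) = \<Union> (set (map set_rtree ts))" by simp
  also have "\<dots> = \<Union> (components E (S - {r}))" using 1(3) by simp
  also have "\<dots> = S - {r}" by (rule comp_Union)
  finally show ?case using 1(1) by (simp add: insert_absorb)
qed

lemma bd_sub: "bd (A \<union> {v}) D \<subseteq> bd A C \<union> {v}" if "D \<subseteq> C"
  using that unfolding bd_def by blast

lemma build:
  "\<forall>A C. ok A \<and> C \<in> components E (V - A) \<and> card (bd A C) \<le> 2 \<and> card C = n \<longrightarrow>
    (\<exists>T. valid_search_tree E C T \<and> (\<forall>p. root_path T p \<longrightarrow> ok (A \<union> set p)) \<and>
         2 ^ height T \<le> (if card (bd A C) \<le> 1 then 2 else 4) * (card C)^2)"
proof (induction n rule: less_induct)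
  case (less n)
  show ?case
  proof (intro allI impI)
    fix A C assume asm: "ok A \<and> C \<in> components E (V - A) \<and> card (bd A C) \<le> 2 \<and> card C = n"
    have okA: "ok A" and C: "C \<in> components E (V - A)" and bd2: "card (bd A C) \<le> 2"
      and cn: "card C = n" using asm by auto
    have AV: "A \<subseteq> V" using okA unfolding ok_def by blast
    have CS: "C \<subseteq> V - A" "C \<noteq> {}" using comp_sub[OF C] by auto
    have CV: "C \<subseteq> V" using CS by blast
    have finC: "finite C" using CV finV by (rule finite_subset)
    have cC: "connected_in E C" using C unfolding components_def by blast
    have C1: "card C \<ge> 1" using finC CS(2) by (simp add: Suc_le_eq card_gt_0_iff)
    define K where "K = (if card (bd A C) \<le> 1 then 2 else (4::nat))"
    define KD where "KD v D = (if card (bd (A \<union> {v}) D) \<le> 1 then 2 else (4::nat))" for v D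
    have Kge: "K \<ge> 2" unfolding K_def by simp
    have "\<exists>v\<in>C. (card (bd A C) \<le> 1 \<or> (\<exists>b1 b2. bd A C = {b1, b2} \<and> \<not> conn (V - {v}) b1 b2)) \<and>
      (\<forall>D\<in>components E (C - {v}). card (bd (A \<union> {v}) D) \<le> 2 \<and> 2 * KD v D * (card D)^2 \<le> K * (card C)^2)"
    proof (cases "card (bd A C) \<le> 1")
      case True
      obtain v where v: "v \<in> C" and cent: "\<forall>D\<in>components E (C - {v}). 2 * card D \<le> card C"
        using centroid[OF CV cC CS(2)] by blast
      have "card (bd (A \<union> {v}) D) \<le> 2 \<and> 2 * KD v D * (card D)^2 \<le> K * (card C)^2"
        if D: "D \<in> components E (C - {v})" for D
      proof
        have DC: "D \<subseteq> C" using comp_sub[OF D] by blast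
        have "card (bd (A \<union> {v}) D) \<le> card (bd A C \<union> {v})"
          using card_mono[OF _ bd_sub[OF DC]] bd_finite[OF AV] by blast
        also have "\<dots> \<le> card (bd A C) + 1" using card_Un_le[of "bd A C" "{v}"] by simp
        finally show "card (bd (A \<union> {v}) D) \<le> 2" using True by simp
        have "2 * card D \<le> card C" using cent D by blast
        then have "(2 * card D)^2 \<le> (card C)^2" by (rule power_mono) simp
        then have "4 * (card D)^2 \<le> (card C)^2" by (simp add: power_mult_distrib)
        moreover have "KD v D * (card D)^2 \<le> 4 * (card D)^2" unfolding KD_def by simp
        ultimately have "2 * (KD v D * (card D)^2) \<le> 2 * (card C)^2" by linarith
        then show "2 * KD v D * (card D)^2 \<le> K * (card C)^2" unfolding K_def using True
          by (simp only: mult.assoc if_True)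
      qed
      then show ?thesis using v True by blast
    next
      case False
      then have "card (bd A C) = 2" using bd2 by simp
      then obtain b1 b2 where bb: "bd A C = {b1, b2}" "b1 \<noteq> b2" by (meson card_2_iff)
      have b: "b1 \<in> A" "b2 \<in> A" using bb unfolding bd_def by auto
      have bV: "b1 \<in> V" "b2 \<in> V" "b1 \<notin> C" "b2 \<notin> C" using b AV CS by auto
      obtain c1 where c1: "c1 \<in> C" "E c1 b1" using bb unfolding bd_def by blast
      obtain c2 where c2: "c2 \<in> C" "E c2 b2" using bb unfolding bd_def by blast
      have uniq: "c = c'" if "c \<in> C" "c' \<in> C" "E c b" "E c' b" "b \<in> A" for b c c'
      proof (rule ccontr)
        assume ne: "c \<noteq> c'"
        have "conn C c c'" using comp_conn[OF C that(1,2)] .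
        moreover have "C \<subseteq> V - {b}" using CS that(5) by blast
        ultimately have "conn (V - {b}) c c'" by (rule conn_mono)
        then show False using distinct_branch[OF esym[OF that(3)] esym[OF that(4)] ne] by blast
      qed
      obtain v where v: "v \<in> C" and sepv: "\<not> conn (V - {v}) b1 b2"
        and L1: "2 * card {z. conn (C - {v}) c1 z} \<le> card C"
        and L2: "2 * card {z. conn (C - {v}) c2 z} \<le> card C"
        using select2[OF CV cC bV bb(2) c1(1) c2(1) c1(2) c2(2)] by blast
      have "card (bd (A \<union> {v}) D) \<le> 2 \<and> 2 * KD v D * (card D)^2 \<le> K * (card C)^2"
        if D: "D \<in> components E (C - {v})" for D
      proof -
        have DC: "D \<subseteq> C - {v}" using comp_sub[OF D] by blast
        have finD: "finite D" using DC finC finite_subset by blast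
        have bdD: "bd (A \<union> {v}) D \<subseteq> {b1, b2, v}" using bd_sub[of D C A v] DC bb by blast
        have b1D: "b1 \<in> bd (A \<union> {v}) D \<Longrightarrow> c1 \<in> D"
          using uniq[OF _ c1(1) _ c1(2) b(1)] DC unfolding bd_def by blast
        have b2D: "b2 \<in> bd (A \<union> {v}) D \<Longrightarrow> c2 \<in> D"
          using uniq[OF _ c2(1) _ c2(2) b(2)] DC unfolding bd_def by blast
        have notboth: "\<not> (c1 \<in> D \<and> c2 \<in> D)"
        proof
          assume "c1 \<in> D \<and> c2 \<in> D"
          then have "conn D c1 c2" using comp_conn[OF D] by blast
          moreover have "D \<subseteq> V - {v}" using DC CV by blast
          ultimately have m: "conn (V - {v}) c1 c2" by (rule conn_mono)
          have vb: "b1 \<in> V - {v}" "b2 \<in> V - {v}" "c1 \<in> V - {v}" "c2 \<in> V - {v}"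
            using bV v \<open>c1 \<in> D \<and> c2 \<in> D\<close> DC CV by auto
          have "conn (V - {v}) b1 c1" using conn_step[OF esym[OF c1(2)] vb(1) vb(3)] .
          moreover have "conn (V - {v}) c2 b2" using conn_step[OF c2(2) vb(4) vb(2)] .
          ultimately have "conn (V - {v}) b1 b2" using m conn_trans by blast
          then show False using sepv by blast
        qed
        have bd2': "card (bd (A \<union> {v}) D) \<le> 2"
        proof -
          have "bd (A \<union> {v}) D \<subseteq> {b1, v} \<or> bd (A \<union> {v}) D \<subseteq> {b2, v}"
            using bdD b1D b2D notboth by blast
          moreover have "card {b1, v} \<le> 2" "card {b2, v} \<le> 2" by (auto simp: card_insert_if)
          ultimately show ?thesis using card_mono[of "{b1, v}"] card_mono[of "{b2, v}"]
            by (meson finite.emptyI finite.insertI le_trans)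
        qed
        have KC: "K = 4" unfolding K_def using False by simp
        show ?thesis
        proof (cases "c1 \<in> D \<or> c2 \<in> D")
          case True
          have "2 * card D \<le> card C"
          proof (cases "c1 \<in> D")
            case True
            then have "D = {z. conn (C - {v}) c1 z}" by (rule comp_class[OF D])
            then show ?thesis using L1 by simp
          next
            case False
            then have "c2 \<in> D" using \<open>c1 \<in> D \<or> c2 \<in> D\<close> by blast
            then have "D = {z. conn (C - {v}) c2 z}" by (rule comp_class[OF D])
            then show ?thesis using L2 by simp
          qed
          then have "(2 * card D)^2 \<le> (card C)^2" by (rule power_mono) simp
          then have "4 * (card D)^2 \<le> (card C)^2" by (simp add: power_mult_distrib)
          moreover have "KD v D * (card D)^2 \<le> 4 * (card D)^2" unfolding KD_def by simp
          ultimately have "2 * (KD v D * (card D)^2) \<le> 4 * (card C)^2"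
            by linarith
          then have "2 * KD v D * (card D)^2 \<le> 4 * (card C)^2" by (simp only: mult.assoc)
          then show ?thesis using bd2' KC by simp
        next
          case False
          then have "bd (A \<union> {v}) D \<subseteq> {v}" using bdD b1D b2D by blast
          then have "card (bd (A \<union> {v}) D) \<le> 1" using card_mono[of "{v}"] by fastforce
          then have "KD v D = 2" unfolding KD_def by simp
          moreover have "card D \<le> card C" using card_mono[OF finC] DC by blast
          then have "(card D)^2 \<le> (card C)^2" by (rule power_mono) simp
          ultimately show ?thesis using bd2' KC by simp
        qed
      qed
      then show ?thesis using v sepv bb by blast
    qed
    then obtain v where v: "v \<in> C"
      and cond: "card (bd A C) \<le> 1 \<or> (\<exists>b1 b2. bd A C = {b1, b2} \<and> \<not> conn (V - {v}) b1 b2)"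
      and child: "\<And>D. D \<in> components E (C - {v}) \<Longrightarrow> card (bd (A \<union> {v}) D) \<le> 2 \<and> 2 * KD v D * (card D)^2 \<le> K * (card C)^2"
      by blast
    have okv: "ok (A \<union> {v})" using add_ok[OF okA C v cond] .
    let ?DS = "components E (C - {v})"
    have "\<exists>T. valid_search_tree E D T \<and> (\<forall>p. root_path T p \<longrightarrow> ok ((A \<union> {v}) \<union> set p)) \<and>
         2 ^ height T \<le> KD v D * (card D)^2" if D: "D \<in> ?DS" for D
    proof -
      have DC: "D \<subseteq> C - {v}" using comp_sub[OF D] by blast
      have "card D < card C" using psubset_card_mono[OF finC] DC v by blast
      then have lt: "card D < n" using cn by simp
      have D': "D \<in> components E (V - (A \<union> {v}))" using sub_comp[OF C v D] .
      show ?thesis using less[OF lt, rule_format, of "A \<union> {v}" D] okv D' child[OF D] unfolding KD_def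
        by blast
    qed
    then obtain f where f: "\<And>D. D \<in> ?DS \<Longrightarrow> valid_search_tree E D (f D) \<and>
        (\<forall>p. root_path (f D) p \<longrightarrow> ok ((A \<union> {v}) \<union> set p)) \<and> 2 ^ height (f D) \<le> KD v D * (card D)^2"
      by metis
    have finDS: "finite ?DS" using comp_finite finC by blast
    obtain l where l: "set l = ?DS" "distinct l" using finite_distinct_list[OF finDS] by blast
    define ts where "ts = map f l"
    have ms: "map set_rtree ts = l"
    proof -
      have "map set_rtree ts = map (\<lambda>D. set_rtree (f D)) l" unfolding ts_def by simp
      also have "\<dots> = map (\<lambda>D. D) l"
        using f l(1) vst_set by (intro map_cong) auto
      finally show ?thesis by simp
    qed
    have vst: "valid_search_tree E C (Node v ts)"
    proof (rule valid_search_tree.intros)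
      show "v \<in> C" by (rule v)
      show "distinct (map set_rtree ts)" using ms l by simp
      show "set (map set_rtree ts) = components E (C - {v})" using ms l by simp
      show "\<forall>t\<in>set ts. valid_search_tree E (set_rtree t) t"
      proof
        fix t assume "t \<in> set ts"
        then obtain D where D: "D \<in> ?DS" "t = f D" using l(1) unfolding ts_def by auto
        then have "valid_search_tree E D t" using f by blast
        moreover then have "set_rtree t = D" by (rule vst_set)
        ultimately show "valid_search_tree E (set_rtree t) t" by simp
      qed
    qed
    have paths: "\<forall>p. root_path (Node v ts) p \<longrightarrow> ok (A \<union> set p)"
    proof (intro allI impI)
      fix p assume "root_path (Node v ts) p"
      then have "p = [v] \<or> (\<exists>t\<in>set ts. \<exists>p'. root_path t p' \<and> p = v # p')"
        by (rule root_path_Node)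
      then consider "p = [v]" | t p' where "t \<in> set ts" "root_path t p'" "p = v # p'"
        by blast
      then show "ok (A \<union> set p)"
      proof cases
        case 1 then show ?thesis using okv by simp
      next
        case 2
        obtain D where "D \<in> ?DS" "t = f D" using 2(1) l(1) unfolding ts_def by auto
        then have "ok ((A \<union> {v}) \<union> set p')" using f 2(2) by blast
        moreover have "A \<union> set p = (A \<union> {v}) \<union> set p'" using 2(3) by auto
        ultimately show ?thesis by simp
      qed
    qed
    have ht: "2 ^ height (Node v ts) \<le> K * (card C)^2"
    proof -
      let ?H = "insert 0 (set (map height ts))"
      have finH: "finite ?H" by simp
      have "Max ?H \<in> ?H" using Max_in[OF finH] by blast
      then have "2 * 2 ^ Max ?H \<le> K * (card C)^2"
      proof
        assume "Max ?H = 0"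
        moreover have "2 * 1 \<le> K * (card C)^2" using Kge C1
          by (metis mult_le_mono nat_mult_1_right one_le_power)
        ultimately show ?thesis by simp
      next
        assume "Max ?H \<in> set (map height ts)"
        then obtain D where D: "D \<in> ?DS" "Max ?H = height (f D)" using l(1) unfolding ts_def by auto
        have "2 * 2 ^ height (f D) \<le> 2 * (KD v D * (card D)^2)" using f[OF D(1)] by simp
        also have "\<dots> \<le> K * (card C)^2" using child[OF D(1)] by simp
        finally show ?thesis using D(2) by simp
      qed
      then show ?thesis by simp
    qed
    show "\<exists>T. valid_search_tree E C T \<and> (\<forall>p. root_path T p \<longrightarrow> ok (A \<union> set p)) \<and>
         2 ^ height T \<le> (if card (bd A C) \<le> 1 then 2 else 4) * (card C)^2"
      using vst paths ht unfolding K_def by blast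
  qed
qed

end



theorem mainTheorem7:
  fixes V :: "'a set" and E :: "'a \<Rightarrow> 'a \<Rightarrow> bool"
  assumes "is_tree V E"
  shows "\<exists>P. valid_search_tree E V P \<and> steiner_closed_search_tree V E P \<and>
             real (height P) \<le> 2 * log 2 (real (card V)) + 2"
proof -
  interpret tr V E by unfold_locales (rule assms)
  have okE: "ok {}" unfolding ok_def br_def by blast
  have C: "V \<in> components E (V - {})" using V_comp by simp
  have bd0: "bd {} V = {}" unfolding bd_def by simp
  obtain T where T: "valid_search_tree E V T" "\<forall>p. root_path T p \<longrightarrow> ok ({} \<union> set p)"
    "2 ^ height T \<le> (if card (bd {} V) \<le> 1 then 2 else 4) * (card V)^2"
    using build[where n="card V", rule_format, of "{}" V] okE C bd0 by auto
  have sc: "steiner_closed_search_tree V E T"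
    unfolding steiner_closed_search_tree_def using T(2) ok_steiner by simp
  have h: "2 ^ height T \<le> 2 * (card V)^2" using T(3) bd0 by simp
  have n1: "card V \<ge> 1" using finV tree unfolding is_tree_def by (simp add: Suc_le_eq card_gt_0_iff)
  have npos: "real (card V) > 0" using n1 by simp
  have "real (2 ^ height T) \<le> real (2 * (card V)^2)" using h by (simp only: of_nat_le_iff)
  then have "(2::real) powr real (height T) \<le> 2 * real (card V) ^ 2"
    by (simp add: powr_realpow)
  then have "real (height T) \<le> log 2 (2 * real (card V) ^ 2)"
    using le_log_iff[of 2 "2 * real (card V) ^ 2" "real (height T)"] npos by simp
  also have "log 2 (2 * real (card V) ^ 2) = 1 + 2 * log 2 (real (card V))"
    using npos by (simp add: log_mult log_nat_power)
  finally have "real (height T) \<le> 2 * log 2 (real (card V)) + 2" by simp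
  then show ?thesis using T(1) sc by blast
qed



end
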